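(* Let $G=(V,\widetilde V,\mathcal E)$ be a bipartite graph with $V=\{v_1,\dots,v_r\}$, $\widetilde V=\{\tilde v_1,\dots,\tilde v_s\}$, $r\le s$, $\mathcal E\subseteq V\times\widetilde V$. Define structured matrices $\bar A\in\{0,*\}^{(s+2)\times(s+2)}$, $\bar B\in\{0,*\}^{(s+2)\times s}$, $\bar C\in\{0,*\}^{r\times(s+2)}$, $\bar K\in\{0,*\}^{s\times r}$ by: $\bar A_{ij}=*$ iff ($i=2$) or ($j=2$) or ($i\in\{3,\dots,s-r+2\}$ and $j\in\{3,\dots,s+2\}$); $\bar B_{ij}=*$ iff $i\in\{s-r+3,\dots,s+2\}$ (any $j$); $\bar C_{ij}=*$ iff $j\in\{3,\dots,s+2\}$ (any $i$); $\bar K_{ij}=*$ iff $(v_j,\tilde v_i)\in\mathcal E$. If $G$ has a perfect matching (a matching of size $r$), then the closed-loop system bipartite graph $\mathcal B(\bar A,\bar B,\bar C,\bar K)$ has a perfect matching.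
   Context: A structured matrix has entries in $\{0,*\}$. For $\bar A\in\{0,*\}^{n\times n}$, $\bar B\in\{0,*\}^{n\times m}$, $\bar C\in\{0,*\}^{p\times n}$, $\bar K\in\{0,*\}^{m\times p}$, the closed-loop system bipartite graph $\mathcal B(\bar A,\bar B,\bar C,\bar K)$ has left vertex set $\{x'_1,\dots,x'_n,u'_1,\dots,u'_m,y'_1,\dots,y'_p\}$, right vertex set $\{x_1,\dots,x_n,u_1,\dots,u_m,y_1,\dots,y_p\}$, and edges: $(x'_j,x_i)$ iff $\bar A_{ji}=*$; $(x'_i,u_j)$ iff $\bar B_{ij}=*$; $(y'_j,x_i)$ iff $\bar C_{ji}=*$; $(u'_i,y_j)$ iff $\bar K_{ij}=*$ (these are the feedback edges, set $\mathcal E_K$); $(u'_i,u_i)$ for all $i\le m$; $(y'_i,y_i)$ for all $i\le p$. A perfect matching is a matching covering every left vertex (both sides have $n+m+p$ vertices). *)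

theory Defs
  imports Main
begin

text \<open>Structured matrices over {0,*} are represented as boolean functions of
(1-based) row and column index: True means *, False means 0.\<close>
type_synonym smat = "nat \<Rightarrow> nat \<Rightarrow> bool"

definition is_matching :: "('a \<times> 'b) set \<Rightarrow> ('a \<times> 'b) set \<Rightarrow> bool" where
  "is_matching E M \<longleftrightarrow> M \<subseteq> E \<and>
     (\<forall>(a,b)\<in>M. \<forall>(a',b')\<in>M. (a = a' \<longleftrightarrow> b = b'))"

text \<open>The same constructors are used
for left vertices (x'_i, u'_i, y'_i) and right vertices (x_i, u_i, y_i); the side is
determined by the position in the edge pair (left, right).\<close>
datatype node = X nat | U nat | Y nat

definition cl_left :: "nat \<Rightarrow> nat \<Rightarrow> nat \<Rightarrow> node set" where
  "cl_left n m p = X ` {1..n} \<union> U ` {1..m} \<union> Y ` {1..p}"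

definition cl_edges :: "nat \<Rightarrow> nat \<Rightarrow> nat \<Rightarrow> smat \<Rightarrow> smat \<Rightarrow> smat \<Rightarrow> smat \<Rightarrow> (node \<times> node) set" where
  "cl_edges n m p A B C K =
     {(X j, X i) | i j. j \<in> {1..n} \<and> i \<in> {1..n} \<and> A j i}
   \<union> {(X i, U j) | i j. i \<in> {1..n} \<and> j \<in> {1..m} \<and> B i j}
   \<union> {(Y j, X i) | i j. j \<in> {1..p} \<and> i \<in> {1..n} \<and> C j i}
   \<union> {(U i, Y j) | i j. i \<in> {1..m} \<and> j \<in> {1..p} \<and> K i j}
   \<union> {(U i, U i) | i. i \<in> {1..m}}
   \<union> {(Y i, Y i) | i. i \<in> {1..p}}"

definition cl_has_perfect_matching :: "nat \<Rightarrow> nat \<Rightarrow> nat \<Rightarrow> smat \<Rightarrow> smat \<Rightarrow> smat \<Rightarrow> smat \<Rightarrow> bool" where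
  "cl_has_perfect_matching n m p A B C K \<longleftrightarrow>
     (\<exists>M. is_matching (cl_edges n m p A B C K) M \<and>
          (\<forall>l\<in>cl_left n m p. \<exists>r. (l, r) \<in> M))"

end

theory Submission
  imports Defs
begin

theorem lemma1:
  fixes r s :: nat and E :: "(nat \<times> nat) set"
  assumes "r \<le> s"
    and "E \<subseteq> {1..r} \<times> {1..s}"
    and "\<exists>M. is_matching E M \<and> card M = r"
  shows "cl_has_perfect_matching (s + 2) s r
           (\<lambda>i j. i = 2 \<or> j = 2 \<or> (i \<in> {3..s - r + 2} \<and> j \<in> {3..s + 2}))
           (\<lambda>i j. i \<in> {s - r + 3..s + 2})
           (\<lambda>i j. j \<in> {3..s + 2})
           (\<lambda>i j. (j, i) \<in> E)"
proof -
  obtain M0 where m0: "is_matching E M0" "card M0 = r" using assms(3) by blast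
  have sub: "M0 \<subseteq> {1..r} \<times> {1..s}" using m0(1) assms(2) unfolding is_matching_def by blast
  have inj: "\<And>a b a' b'. (a,b) \<in> M0 \<Longrightarrow> (a',b') \<in> M0 \<Longrightarrow> (a = a' \<longleftrightarrow> b = b')"
    using m0(1) unfolding is_matching_def by blast
  have fin: "finite M0" using sub finite_subset by blast
  have "inj_on fst M0" using inj by (auto simp: inj_on_def)
  hence "card (fst ` M0) = r" using m0(2) card_image by metis
  moreover have "fst ` M0 \<subseteq> {1..r}" using sub by auto
  ultimately have fsteq: "fst ` M0 = {1..r}"
    by (metis card_atLeastAtMost card_subset_eq diff_Suc_1 finite_atLeastAtMost)
  have cov: "\<And>j. j \<in> {1..r} \<Longrightarrow> \<exists>i. (j,i) \<in> M0" using fsteq by force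
  define M where "M = {(X 1, X 2), (X 2, X 1)}
     \<union> {(Y j, X (j+2)) | j. j \<in> {1..r}}
     \<union> {(X i, X (i+r)) | i. i \<in> {3..s-r+2}}
     \<union> {(X (s-r+2+j), U i) | i j. (j,i) \<in> M0}
     \<union> {(U i, Y j) | i j. (j,i) \<in> M0}
     \<union> {(U i, U i) | i. i \<in> {1..s} \<and> i \<notin> snd ` M0}"
  let ?E = "cl_edges (s + 2) s r
           (\<lambda>i j. i = 2 \<or> j = 2 \<or> (i \<in> {3..s - r + 2} \<and> j \<in> {3..s + 2}))
           (\<lambda>i j. i \<in> {s - r + 3..s + 2})
           (\<lambda>i j. j \<in> {3..s + 2})
           (\<lambda>i j. (j, i) \<in> E)"
  have e4: "{(X (s-r+2+j), U i) | i j. (j,i) \<in> M0} \<subseteq> ?E"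
  proof
    fix x assume "x \<in> {(X (s-r+2+j), U i) | i j. (j,i) \<in> M0}"
    then obtain i j where x: "x = (X (s-r+2+j), U i)" "(j,i) \<in> M0" by blast
    then have "j \<in> {1..r}" "i \<in> {1..s}" using sub by auto
    then have "x \<in> {(X i, U j) | i j. i \<in> {1..s+2} \<and> j \<in> {1..s} \<and> i \<in> {s - r + 3..s + 2}}"
      using x assms(1) by auto
    then show "x \<in> ?E" unfolding cl_edges_def by blast
  qed
  have e5: "{(U i, Y j) | i j. (j,i) \<in> M0} \<subseteq> ?E"
  proof
    fix x assume "x \<in> {(U i, Y j) | i j. (j,i) \<in> M0}"
    then obtain i j where x: "x = (U i, Y j)" "(j,i) \<in> M0" by blast
    then have "j \<in> {1..r}" "i \<in> {1..s}" "(j,i) \<in> E" using sub m0(1) unfolding is_matching_def by auto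
    then have "x \<in> {(U i, Y j) | i j. i \<in> {1..s} \<and> j \<in> {1..r} \<and> (j,i) \<in> E}"
      using x by auto
    then show "x \<in> ?E" unfolding cl_edges_def by blast
  qed
  have e1: "{(X 1, X 2), (X 2, X 1)} \<subseteq> ?E" unfolding cl_edges_def by auto
  have e2: "{(Y j, X (j+2)) | j. j \<in> {1..r}} \<subseteq> ?E" using assms(1) unfolding cl_edges_def by auto
  have e3: "{(X i, X (i+r)) | i. i \<in> {3..s-r+2}} \<subseteq> ?E" using assms(1) unfolding cl_edges_def by auto
  have e6: "{(U i, U i) | i. i \<in> {1..s} \<and> i \<notin> snd ` M0} \<subseteq> ?E" unfolding cl_edges_def by auto
  have e: "M \<subseteq> ?E" unfolding M_def using e1 e2 e3 e4 e5 e6 by (simp only: Un_subset_iff)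
  define \<sigma> where "\<sigma> j = (THE i. (j,i) \<in> M0)" for j
  define \<tau> where "\<tau> i = (THE j. (j,i) \<in> M0)" for i
  have s1: "(j,i) \<in> M0 \<Longrightarrow> \<sigma> j = i" for i j
    unfolding \<sigma>_def by (rule the_equality) (use inj in blast)+
  have t1: "(j,i) \<in> M0 \<Longrightarrow> \<tau> i = j" for i j
    unfolding \<tau>_def by (rule the_equality) (use inj in blast)+
  define f where "f a = (case a of X i \<Rightarrow> (if i = 1 then X 2 else if i = 2 then X 1
      else if i \<le> s-r+2 then X (i+r) else U (\<sigma> (i-(s-r+2))))
    | Y j \<Rightarrow> X (j+2) | U i \<Rightarrow> (if i \<in> snd ` M0 then Y (\<tau> i) else U i))" for a
  define g where "g b = (case b of X i \<Rightarrow> (if i = 1 then X 2 else if i = 2 then X 1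
      else if i \<le> r+2 then Y (i-2) else X (i-r))
    | U i \<Rightarrow> (if i \<in> snd ` M0 then X (s-r+2+\<tau> i) else U i) | Y j \<Rightarrow> U (\<sigma> j))" for b
  have fg: "b = f a \<and> a = g b" if ab: "(a,b) \<in> M" for a b
  proof -
    consider "(a,b) \<in> {(X 1, X 2), (X 2, X 1)}"
      | "(a,b) \<in> {(Y j, X (j+2)) | j. j \<in> {1..r}}"
      | "(a,b) \<in> {(X i, X (i+r)) | i. i \<in> {3..s-r+2}}"
      | "(a,b) \<in> {(X (s-r+2+j), U i) | i j. (j,i) \<in> M0}"
      | "(a,b) \<in> {(U i, Y j) | i j. (j,i) \<in> M0}"
      | "(a,b) \<in> {(U i, U i) | i. i \<in> {1..s} \<and> i \<notin> snd ` M0}"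
      using ab unfolding M_def by blast
    then show ?thesis
    proof cases
      case 1 then show ?thesis by (auto simp: f_def g_def)
    next
      case 2 then show ?thesis by (auto simp: f_def g_def)
    next
      case 3 then show ?thesis using assms(1) by (auto simp: f_def g_def)
    next
      case 4
      then obtain i j where x: "a = X (s-r+2+j)" "b = U i" "(j,i) \<in> M0" by blast
      then have "j \<in> {1..r}" "i \<in> snd ` M0" using sub by force+
      then show ?thesis using x s1 t1 assms(1) by (auto simp: f_def g_def)
    next
      case 5
      then obtain i j where x: "a = U i" "b = Y j" "(j,i) \<in> M0" by blast
      then have "i \<in> snd ` M0" by force
      then show ?thesis using x s1 t1 by (auto simp: f_def g_def)
    next
      case 6 then show ?thesis by (auto simp: f_def g_def)
    qed
  qed
  have m: "\<forall>(a,b)\<in>M. \<forall>(a',b')\<in>M. (a = a' \<longleftrightarrow> b = b')"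
    using fg by blast
  have c: "\<forall>l\<in>cl_left (s+2) s r. \<exists>r. (l, r) \<in> M"
  proof
    fix l assume l: "l \<in> cl_left (s+2) s r"
    show "\<exists>r. (l, r) \<in> M"
    proof (cases l)
      case (X i)
      then have i: "i \<in> {1..s+2}" using l by (auto simp: cl_left_def)
      show ?thesis
      proof (cases "i \<le> s - r + 2")
        case True
        then show ?thesis using i X unfolding M_def
          by (cases "i = 1"; cases "i = 2") auto
      next
        case False
        then obtain j where j: "i = s-r+2+j" "j \<in> {1..r}" using i assms(1)
          by (intro that[of "i - (s-r+2)"]) auto
        then obtain k where "(j,k) \<in> M0" using cov by blast
        then show ?thesis using X j unfolding M_def by blast
      qed
    next
      case (U i)
      then have i: "i \<in> {1..s}" using l by (auto simp: cl_left_def)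
      show ?thesis
      proof (cases "i \<in> snd ` M0")
        case True then obtain j where "(j,i) \<in> M0" by force
        then show ?thesis using U unfolding M_def by blast
      next
        case False then show ?thesis using U i unfolding M_def by blast
      qed
    next
      case (Y j)
      then show ?thesis using l unfolding M_def by (auto simp: cl_left_def)
    qed
  qed
  show ?thesis unfolding cl_has_perfect_matching_def is_matching_def
    using e m c by blast
qed

end
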